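(* For every integer $N\ge16$ and $\rho\in[2/3,1)$ there is $C<\infty$ such that for every interval $I\subset\mathbb R$, $$\int_I\big|H_\flat(\mathbf 1_I\widehat\omega)\big|^2\,d\widehat{\dot\sigma}=\sum_{k,j:\dot z^k_j\in I}\widehat s^k_j\,\big|H_\flat(\mathbf 1_I\widehat\omega)(\dot z^k_j)\big|^2\le C\,\widehat\omega(I).$$
   Context: Cantor intervals: fix an integer $N\ge16$ and $\rho\in[2/3,1)$. Set $I^0_1=[0,1]$. Each interval $I=[a,a+N^{-k}]$ of generation $k$ has two children of generation $k+1$: the left child $I_-=[a,a+N^{-k-1}]$ and the right child $I_+=[a+N^{-k}-N^{-k-1},a+N^{-k}]$. The $2^k$ intervals of generation $k$ are denoted $I^k_j$, $1\le j\le 2^k$, numbered left to right; $\mathcal D$ is the collection of all of them. $\dot z^k_j$ is the center of $I^k_j$. The Cantor set is $\mathsf E^{(N)}=\bigcap_{k}\bigcup_{j}I^k_j$. Redistributed Cantor measure: with $\eta=1/N$, $\widehat\omega$ is the unique Borel probability measure supported on $\mathsf E^{(N)}$ such that $\widehat\omega(I^1_1)=\widehat\omega(I^1_2)=\frac12$ and for every $I\in\mathcal D$ of generation $\ge1$: if $I$ is the left child of its parent then $\widehat\omega(I_-)=\frac{1+\eta}2\widehat\omega(I)$, $\widehat\omega(I_+)=\frac{1-\eta}2\widehat\omega(I)$; if $I$ is the right child of its parent then $\widehat\omega(I_-)=\frac{1-\eta}2\widehat\omega(I)$, $\widehat\omega(I_+)=\frac{1+\eta}2\widehat\omega(I)$.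 Weights: $\widehat s^k_j=N^{-2k}/\widehat\omega(I^k_j)$; $\widehat{\dot\sigma}=\sum_{k\ge0}\sum_{j=1}^{2^k}\widehat s^k_j\,\delta_{\dot z^k_j}$. Flattened kernel: $K_\flat$ is defined first on $[N^{-1/2},N^{1/2}]$ as a smooth nonincreasing function with values in $[N^{-1/2},N^{1/2}]$ such that $K_\flat(x)=1/x$ for $N^{-1/2}\le x\le(\rho N)^{-1/2}$ and for $(\rho N)^{1/2}\le x\le N^{1/2}$, and $K_\flat(x)=1$ for $(\rho^2N)^{-1/2}\le x\le(\rho^2N)^{1/2}$; then extended to $(0,\infty)$ by $K_\flat(x)=N^{-k}K_\flat(N^{-k}x)$ for $x\in[N^{k-1/2},N^{k+1/2}]$, $k\in\mathbb Z$, and to $\mathbb R\setminus\{0\}$ as an odd function. $H_\flat\mu(x)=\int K_\flat(x-y)\,d\mu(y)$. *)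

theory Defs
  imports "HOL-Probability.Probability"
begin

text \<open>Generation-k intervals are indexed by j < 2^k (0-based, left to right).
  The children of interval (k,j) are (k+1,2j) (left) and (k+1,2j+1) (right).\<close>

fun cantor_left :: "nat \<Rightarrow> nat \<Rightarrow> nat \<Rightarrow> real" where
  "cantor_left N 0 j = 0"
| "cantor_left N (Suc k) j =
     cantor_left N k (j div 2) +
     (if odd j then (1 / real N) ^ k - (1 / real N) ^ Suc k else 0)"

definition cantor_int :: "nat \<Rightarrow> nat \<Rightarrow> nat \<Rightarrow> real set" where
  "cantor_int N k j = {cantor_left N k j .. cantor_left N k j + (1 / real N) ^ k}"

definition cantor_center :: "nat \<Rightarrow> nat \<Rightarrow> nat \<Rightarrow> real" where
  "cantor_center N k j = cantor_left N k j + (1 / real N) ^ k / 2"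

definition cantor_set :: "nat \<Rightarrow> real set" where
  "cantor_set N = (\<Inter>k. \<Union>j\<in>{..<2^k}. cantor_int N k j)"

definition is_redistributed_cantor_measure :: "nat \<Rightarrow> real measure \<Rightarrow> bool" where
  "is_redistributed_cantor_measure N \<omega> \<longleftrightarrow>
     sets \<omega> = sets borel \<and> prob_space \<omega> \<and>
     emeasure \<omega> (UNIV - cantor_set N) = 0 \<and>
     measure \<omega> (cantor_int N 1 0) = 1/2 \<and> measure \<omega> (cantor_int N 1 1) = 1/2 \<and>
     (\<forall>k\<ge>1. \<forall>j<2^k.
        (even j \<longrightarrow>
           measure \<omega> (cantor_int N (Suc k) (2*j)) = (1 + 1/real N)/2 * measure \<omega> (cantor_int N k j) \<and>
           measure \<omega> (cantor_int N (Suc k) (2*j+1)) = (1 - 1/real N)/2 * measure \<omega> (cantor_int N k j)) \<and>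
        (odd j \<longrightarrow>
           measure \<omega> (cantor_int N (Suc k) (2*j)) = (1 - 1/real N)/2 * measure \<omega> (cantor_int N k j) \<and>
           measure \<omega> (cantor_int N (Suc k) (2*j+1)) = (1 + 1/real N)/2 * measure \<omega> (cantor_int N k j)))"

definition cantor_weight :: "nat \<Rightarrow> real measure \<Rightarrow> nat \<Rightarrow> nat \<Rightarrow> real" where
  "cantor_weight N \<omega> k j = (1 / real N) ^ (2*k) / measure \<omega> (cantor_int N k j)"

definition smooth_on :: "real set \<Rightarrow> (real \<Rightarrow> real) \<Rightarrow> bool" where
  "smooth_on S f \<longleftrightarrow> (\<exists>D :: nat \<Rightarrow> real \<Rightarrow> real.
     (\<forall>x\<in>S. D 0 x = f x) \<and>
     (\<forall>n. \<forall>x\<in>S. (D n has_real_derivative D (Suc n) x) (at x)))"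

definition is_flat_kernel :: "nat \<Rightarrow> real \<Rightarrow> (real \<Rightarrow> real) \<Rightarrow> bool" where
  "is_flat_kernel N \<rho> K \<longleftrightarrow>
     (let a = real N powr (-1/2); b = real N powr (1/2) in
       smooth_on {a<..<b} K \<and>
       (\<forall>x\<in>{a..b}. \<forall>y\<in>{a..b}. x \<le> y \<longrightarrow> K y \<le> K x) \<and>
       (\<forall>x\<in>{a..b}. K x \<in> {a..b}) \<and>
       (\<forall>x. a \<le> x \<and> x \<le> (\<rho> * real N) powr (-1/2) \<longrightarrow> K x = 1 / x) \<and>
       (\<forall>x. (\<rho> * real N) powr (1/2) \<le> x \<and> x \<le> b \<longrightarrow> K x = 1 / x) \<and>
       (\<forall>x. (\<rho>^2 * real N) powr (-1/2) \<le> x \<and> x \<le> (\<rho>^2 * real N) powr (1/2) \<longrightarrow> K x = 1)) \<and>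
     (\<forall>k::int. \<forall>x. real N powr (real_of_int k - 1/2) \<le> x \<and> x \<le> real N powr (real_of_int k + 1/2)
        \<longrightarrow> K x = real N powr (- real_of_int k) * K (real N powr (- real_of_int k) * x)) \<and>
     (\<forall>x. K (- x) = - K x)"

definition H_flat_restr :: "(real \<Rightarrow> real) \<Rightarrow> real measure \<Rightarrow> real set \<Rightarrow> real \<Rightarrow> real" where
  "H_flat_restr K \<omega> I x = (\<integral>y. indicator I y * K (x - y) \<partial>\<omega>)"

end

theory Submission
  imports Defs
begin

locale CS =
  fixes N :: nat and \<rho> :: real and K :: "real \<Rightarrow> real" and \<omega> :: "real measure"
  assumes N16: "N \<ge> 16" and rho1: "2/3 \<le> \<rho>" and rho2: "\<rho> < 1"
    and flat: "is_flat_kernel N \<rho> K"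
    and meas: "is_redistributed_cantor_measure N \<omega>"
begin

abbreviation "lf \<equiv> cantor_left N"
abbreviation "ci \<equiv> cantor_int N"
abbreviation "h k \<equiv> (1 / real N) ^ k"
abbreviation "w k j \<equiv> measure \<omega> (cantor_int N k j)"

lemma Npos: "real N \<ge> 16" using N16 by simp

lemma h_pos: "h k > 0" using Npos by simp
lemma h_Suc: "h (Suc k) = h k / real N" by simp
lemma h_Suc_le: "16 * h (Suc k) \<le> h k"
proof -
  have "16 * h (Suc k) = h k * (16 / real N)" by (simp add: field_simps)
  also have "\<dots> \<le> h k * 1" using Npos h_pos[of k] by (intro mult_left_mono) auto
  finally show ?thesis by simp
qed
lemma Nh: "real N ^ m * h m = 1" using Npos by (simp add: power_one_over field_simps)

lemma lf0: "lf (Suc k) (2*j) = lf k j" by simp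
lemma lf1: "lf (Suc k) (2*j+1) = lf k j + h k - h (Suc k)" by simp

lemma ci_def': "ci k j = {lf k j .. lf k j + h k}" by (simp add: cantor_int_def)

lemma child_sub: "ci (Suc k) j \<subseteq> ci k (j div 2)"
proof -
  have a: "16 * h (Suc k) \<le> h k" by (rule h_Suc_le)
  have "h (Suc k) > 0" by (rule h_pos)
  then show ?thesis using a by (auto simp: cantor_int_def)
qed

lemma anc_sub: "ci (k+d) j \<subseteq> ci k (j div 2^d)"
proof (induction d arbitrary: j)
  case 0 then show ?case by simp
next
  case (Suc d)
  have "ci (k + Suc d) j \<subseteq> ci (k+d) (j div 2)" using child_sub[of "k+d" j] by simp
  also have "\<dots> \<subseteq> ci k (j div 2 div 2^d)" by (rule Suc)
  also have "j div 2 div 2^d = j div 2^(Suc d)" by (simp add: div_mult2_eq)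
  finally show ?case .
qed

lemma order: "j < j' \<Longrightarrow> j' < 2^k \<Longrightarrow> lf k j + h k < lf k j'"
proof (induction k arbitrary: j j')
  case 0 then show ?case by simp
next
  case (Suc k)
  define p where "p = j div 2"
  define p' where "p' = j' div 2"
  have pp: "p \<le> p'" using Suc.prems by (simp add: p_def p'_def div_le_mono)
  have p'b: "p' < 2^k" using Suc.prems by (simp add: p'_def less_mult_imp_div_less)
  have hs: "16 * h (Suc k) \<le> h k" by (rule h_Suc_le)
  have hp: "h (Suc k) > 0" by (rule h_pos)
  show ?case
  proof (cases "p = p'")
    case True
    then have "even j" "odd j'" using Suc.prems unfolding p_def p'_def by presburger+
    then show ?thesis using True hs hp unfolding p_def p'_def by auto
  next
    case False
    then have "p < p'" using pp by simp
    from Suc.IH[OF this p'b] have "lf k p + h k < lf k p'" .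
    moreover have "lf (Suc k) j + h (Suc k) \<le> lf k p + h k"
      using child_sub[of k j] hp by (auto simp: cantor_int_def p_def)
    moreover have "lf k p' \<le> lf (Suc k) j'"
      using hs hp by (auto simp: p'_def)
    ultimately show ?thesis by linarith
  qed
qed

lemma disj_same: "j \<noteq> j' \<Longrightarrow> j < 2^k \<Longrightarrow> j' < 2^k \<Longrightarrow> ci k j \<inter> ci k j' = {}"
proof -
  assume a: "j \<noteq> j'" "j < 2^k" "j' < 2^k"
  show ?thesis
  proof (cases "j < j'")
    case True from order[OF True a(3)] show ?thesis by (auto simp: cantor_int_def)
  next
    case False then have "j' < j" using a by simp
    from order[OF this a(2)] show ?thesis by (auto simp: cantor_int_def)
  qed
qed

lemma nest_or_disj:
  assumes "k \<le> k'" "j < 2^k" "j' < 2^k'" "j' div 2^(k'-k) \<noteq> j"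
  shows "ci k j \<inter> ci k' j' = {}"
proof -
  have "ci k' j' \<subseteq> ci k (j' div 2^(k'-k))" using anc_sub[of k "k'-k" j'] assms by simp
  moreover have "j' div 2^(k'-k) < 2^k"
    using assms by (simp add: less_mult_imp_div_less power_add[symmetric])
  ultimately show ?thesis using disj_same[OF assms(4) _ assms(2)] by blast
qed


abbreviation "cs \<equiv> cantor_set N"

lemma sets_om: "sets \<omega> = sets borel" using meas by (simp add: is_redistributed_cantor_measure_def)
lemma space_om: "space \<omega> = UNIV" using sets_eq_imp_space_eq[OF sets_om] by simp
lemma prob: "prob_space \<omega>" using meas by (simp add: is_redistributed_cantor_measure_def)
lemma fin: "finite_measure \<omega>" using prob by (simp add: prob_space_def)
lemma null_cs: "emeasure \<omega> (UNIV - cs) = 0" using meas by (simp add: is_redistributed_cantor_measure_def)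

lemma ci_sets[simp, measurable]: "ci k j \<in> sets \<omega>" using sets_om by (simp add: cantor_int_def)
lemma cs_borel: "cs \<in> sets borel"
  unfolding cantor_set_def by (auto simp: cantor_int_def)
lemma cs_sets[simp]: "cs \<in> sets \<omega>" using sets_om cs_borel by simp
lemma AE_cs: "AE y in \<omega>. y \<in> cs"
proof (rule AE_I'[of "UNIV - cs"])
  show "UNIV - cs \<in> null_sets \<omega>" using null_cs cs_sets space_om
    by (metis null_setsI sets.compl_sets)
qed (auto)

lemma cs_cover: "y \<in> cs \<Longrightarrow> \<exists>j<2^k. y \<in> ci k j"
  unfolding cantor_set_def by auto

lemma cs_sub01: "cs \<subseteq> ci 0 0"
proof
  fix x assume "x \<in> cs"
  from cs_cover[OF this, of 0] show "x \<in> ci 0 0" by auto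
qed

lemma cs_child: assumes "y \<in> cs" "y \<in> ci k j" "j < 2^k"
  shows "y \<in> ci (Suc k) (2*j) \<or> y \<in> ci (Suc k) (2*j+1)"
proof -
  obtain j' where j': "j' < 2^Suc k" "y \<in> ci (Suc k) j'" using cs_cover[OF assms(1)] by blast
  have "j' div 2 = j"
  proof (rule ccontr)
    assume "j' div 2 \<noteq> j"
    from nest_or_disj[of k "Suc k" j j'] this j' assms show False by auto
  qed
  then have "j' = 2*j \<or> j' = 2*j+1" by presburger
  then show ?thesis using j' by auto
qed

lemma meas_mono: "A \<in> sets \<omega> \<Longrightarrow> B \<in> sets \<omega> \<Longrightarrow> A \<subseteq> B \<Longrightarrow> measure \<omega> A \<le> measure \<omega> B"
  using fin by (simp add: finite_measure.finite_measure_mono)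

lemma meas_cs: "A \<in> sets \<omega> \<Longrightarrow> measure \<omega> A = measure \<omega> (A \<inter> cs)"
proof -
  assume A: "A \<in> sets \<omega>"
  have "(UNIV - cs) \<in> null_sets \<omega>" using null_cs cs_sets space_om
    by (metis null_setsI sets.compl_sets)
  then have "A - (UNIV - cs) \<in> sets \<omega> \<and> measure \<omega> (A - (UNIV - cs)) = measure \<omega> A"
    using measure_Diff_null_set[OF A] A by auto
  moreover have "A - (UNIV - cs) = A \<inter> cs" by auto
  ultimately show ?thesis by simp
qed

lemma w00: "w 0 0 = 1"
proof -
  have "w 0 0 = measure \<omega> (ci 0 0 \<inter> cs)" by (rule meas_cs) simp
  also have "ci 0 0 \<inter> cs = cs" using cs_sub01 by auto
  also have "measure \<omega> cs = measure \<omega> (UNIV \<inter> cs)" by simp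
  also have "\<dots> = measure \<omega> UNIV" using meas_cs[of UNIV] space_om by (metis sets.top)
  also have "\<dots> = 1" using prob space_om by (metis prob_space.prob_space)
  finally show ?thesis .
qed

lemma w1: "w 1 0 = 1/2" "w 1 1 = 1/2" using meas by (auto simp: is_redistributed_cantor_measure_def)

lemma w_rec: assumes "j < 2^k"
  shows "w (Suc k) (2*j) + w (Suc k) (2*j+1) = w k j
     \<and> 3 * w (Suc k) (2*j) \<ge> w k j \<and> 3 * w (Suc k) (2*j+1) \<ge> w k j
     \<and> w (Suc k) (2*j) - w (Suc k) (2*j+1) = (if k = 0 then 0 else if even j then w k j / real N else - w k j / real N)"
proof (cases k)
  case 0 then show ?thesis using assms w00 w1 by simp
next
  case (Suc k')
  have Ng: "real N \<ge> 16" by (rule Npos)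
  have wnn: "w k j \<ge> 0" by simp
  from meas have R: "\<forall>k\<ge>1. \<forall>j<2^k.
        (even j \<longrightarrow>
           w (Suc k) (2*j) = (1 + 1/real N)/2 * w k j \<and>
           w (Suc k) (2*j+1) = (1 - 1/real N)/2 * w k j) \<and>
        (odd j \<longrightarrow>
           w (Suc k) (2*j) = (1 - 1/real N)/2 * w k j \<and>
           w (Suc k) (2*j+1) = (1 + 1/real N)/2 * w k j)"
    by (simp add: is_redistributed_cantor_measure_def)
  have k1: "k \<ge> 1" using Suc by simp
  have c1: "1 \<le> 3 * ((1 - 1/real N)/2)" using Ng by (simp add: field_simps)
  have c2: "1 \<le> 3 * ((1 + 1/real N)/2)" using Ng by (simp add: field_simps)
  have a: "w k j \<le> 3 * ((1 - 1/real N)/2 * w k j)"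
    using mult_right_mono[OF c1 wnn] by (metis mult.assoc mult_1)
  have b: "w k j \<le> 3 * ((1 + 1/real N)/2 * w k j)"
    using mult_right_mono[OF c2 wnn] by (metis mult.assoc mult_1)
  have s1: "(1 + 1/real N)/2 * w k j + (1 - 1/real N)/2 * w k j = w k j" by (simp add: field_simps)
  have s2: "(1 + 1/real N)/2 * w k j - (1 - 1/real N)/2 * w k j = w k j / real N" by (simp add: field_simps)
  have s3: "(1 - 1/real N)/2 * w k j - (1 + 1/real N)/2 * w k j = - w k j / real N" by (simp add: field_simps)
  show ?thesis
  proof (cases "even j")
    case True
    then have e: "w (Suc k) (2*j) = (1 + 1/real N)/2 * w k j" "w (Suc k) (2*j+1) = (1 - 1/real N)/2 * w k j"
      using R k1 assms by auto
    have "k \<noteq> 0" using Suc by simp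
    then show ?thesis unfolding e using a b s1 s2 True by (simp only: if_False if_True)
  next
    case False
    then have e: "w (Suc k) (2*j) = (1 - 1/real N)/2 * w k j" "w (Suc k) (2*j+1) = (1 + 1/real N)/2 * w k j"
      using R k1 assms by auto
    have "k \<noteq> 0" using Suc by simp
    then show ?thesis unfolding e using a b s1 s3 False by (simp only: if_False if_True) (simp add: add.commute)
  qed
qed

lemma w_pos: "j < 2^k \<Longrightarrow> w k j > 0"
proof (induction k arbitrary: j)
  case 0 then show ?case using w00 by simp
next
  case (Suc k)
  have jb: "j div 2 < 2^k" using Suc.prems by (simp add: less_mult_imp_div_less)
  have ih: "w k (j div 2) > 0" by (rule Suc.IH[OF jb])
  have "j = 2 * (j div 2) \<or> j = 2*(j div 2) + 1" by presburger
  then have "3 * w (Suc k) j \<ge> w k (j div 2)" using w_rec[OF jb] by metis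
  then show ?case using ih by linarith
qed

lemma w_child3: "j < 2^Suc k \<Longrightarrow> w k (j div 2) \<le> 3 * w (Suc k) j"
proof -
  assume a: "j < 2^Suc k"
  have jb: "j div 2 < 2^k" using a by (simp add: less_mult_imp_div_less)
  have "j = 2 * (j div 2) \<or> j = 2*(j div 2) + 1" by presburger
  then show ?thesis using w_rec[OF jb] by metis
qed

end

definition anc :: "nat \<Rightarrow> nat \<Rightarrow> nat \<Rightarrow> nat" where "anc k j m = j div 2^(k-m)"
definition sib :: "nat \<Rightarrow> nat" where "sib c = (if even c then c+1 else c-1)"
definition sg :: "nat \<Rightarrow> real" where "sg c = (if odd c then 1 else -1)"

context CS begin

definition pc where "pc k j m = ci (Suc m) (sib (anc k j (Suc m)))"
definition Vf where "Vf X k j = (\<Sum>m<k. sg (anc k j (Suc m)) * real N ^ m * measure \<omega> (X \<inter> pc k j m))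
   + real N ^ k * (measure \<omega> (X \<inter> ci (Suc k) (2*j)) - measure \<omega> (X \<inter> ci (Suc k) (2*j+1)))"

lemma anc_Suc: "m < k \<Longrightarrow> anc (Suc k) j (Suc m) = anc k (j div 2) (Suc m)"
proof -
  assume "m < k"
  then have "Suc k - Suc m = Suc (k - Suc m)" by simp
  then show ?thesis unfolding anc_def by (simp add: div_mult2_eq)
qed

lemma anc_self[simp]: "anc k j k = j" by (simp add: anc_def)

lemma zero: "j < 2^k \<Longrightarrow> Vf UNIV k j = 0"
proof (induction k arbitrary: j)
  case 0 then show ?case using w1 by (simp add: Vf_def)
next
  case (Suc k)
  define p where "p = j div 2"
  have pb: "p < 2^k" using Suc.prems by (simp add: p_def less_mult_imp_div_less)
  have IH: "(\<Sum>m<k. sg (anc k p (Suc m)) * real N ^ m * w (Suc m) (sib (anc k p (Suc m))))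
     + real N ^ k * (w (Suc k) (2*p) - w (Suc k) (2*p+1)) = 0"
    using Suc.IH[OF pb] by (simp add: Vf_def pc_def)
  have S: "(\<Sum>m<Suc k. sg (anc (Suc k) j (Suc m)) * real N ^ m * w (Suc m) (sib (anc (Suc k) j (Suc m))))
     = (\<Sum>m<k. sg (anc k p (Suc m)) * real N ^ m * w (Suc m) (sib (anc k p (Suc m))))
       + sg j * real N ^ k * w (Suc k) (sib j)"
    by (simp add: anc_Suc p_def)
  have R: "w (Suc (Suc k)) (2*j) - w (Suc (Suc k)) (2*j+1) = (if even j then w (Suc k) j / real N else - w (Suc k) j / real N)"
    using w_rec[OF Suc.prems] by simp
  have Np: "real N > 0" using Npos by simp
  have NN: "real N ^ Suc k * (x / real N) = real N ^ k * x" for x using Np by simp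
  have V: "Vf UNIV (Suc k) j = (\<Sum>m<k. sg (anc k p (Suc m)) * real N ^ m * w (Suc m) (sib (anc k p (Suc m))))
       + sg j * real N ^ k * w (Suc k) (sib j) + real N ^ Suc k * (w (Suc (Suc k)) (2*j) - w (Suc (Suc k)) (2*j+1))"
    unfolding Vf_def pc_def using S by simp
  define X where "X = (\<Sum>m<k. sg (anc k p (Suc m)) * real N ^ m * w (Suc m) (sib (anc k p (Suc m))))"
  have IH': "X + real N ^ k * w (Suc k) (2*p) - real N ^ k * w (Suc k) (2*p+1) = 0"
    using IH unfolding X_def by (simp add: right_diff_distrib)
  show ?case
  proof (cases "even j")
    case True
    then have j: "j = 2*p" unfolding p_def by simp
    have sb: "sib j = 2*p+1" "sg j = -1" using True j by (auto simp: sib_def sg_def)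
    have D: "real N ^ Suc k * (w (Suc (Suc k)) (2*j) - w (Suc (Suc k)) (2*j+1)) = real N ^ k * w (Suc k) (2*p)"
      using R True NN[of "w (Suc k) j"] j by simp
    have "Vf UNIV (Suc k) j = X - real N ^ k * w (Suc k) (2*p+1) + real N ^ k * w (Suc k) (2*p)"
      using V D sb unfolding X_def by simp
    then show ?thesis using IH' by linarith
  next
    case False
    then have j: "j = 2*p+1" unfolding p_def by simp
    have sb: "sib j = 2*p" "sg j = 1" using False j by (auto simp: sib_def sg_def)
    have D: "real N ^ Suc k * (w (Suc (Suc k)) (2*j) - w (Suc (Suc k)) (2*j+1)) = - (real N ^ k * w (Suc k) (2*p+1))"
      using R False NN[of "- w (Suc k) j"] j by simp
    have "Vf UNIV (Suc k) j = X + real N ^ k * w (Suc k) (2*p) - real N ^ k * w (Suc k) (2*p+1)"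
      using V D sb unfolding X_def by simp
    then show ?thesis using IH' by linarith
  qed
qed

lemma sqrtN: "sqrt (real N) \<ge> 4"
proof -
  have "sqrt 16 \<le> sqrt (real N)" using Npos by (simp only: real_sqrt_le_iff)
  then show ?thesis by simp
qed

lemma Kval: assumes "3/8 \<le> real N ^ m * x" "real N ^ m * x \<le> 1"
  shows "K x = real N ^ m"
proof -
  have Np: "real N > 0" using Npos by simp
  have Nm: "real N ^ m > 0" using Np by simp
  from flat have scale: "\<And>k::int. \<And>x. real N powr (real_of_int k - 1/2) \<le> x \<and> x \<le> real N powr (real_of_int k + 1/2)
        \<Longrightarrow> K x = real N powr (- real_of_int k) * K (real N powr (- real_of_int k) * x)"
    and one: "\<And>x. (\<rho>^2 * real N) powr (-1/2) \<le> x \<and> x \<le> (\<rho>^2 * real N) powr (1/2) \<Longrightarrow> K x = 1"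
    unfolding is_flat_kernel_def Let_def by blast+
  have pm: "real N powr (- real m) = 1 / real N ^ m"
    using Np by (simp add: powr_minus powr_realpow divide_inverse)
  have pmm: "real N powr (- real_of_int (- int m)) = real N ^ m"
    using Np by (simp add: powr_realpow)
  have x1: "x \<ge> (3/8) / real N ^ m" using assms(1) Nm by (simp add: field_simps)
  have x2: "x \<le> 1 / real N ^ m" using assms(2) Nm by (simp add: field_simps)
  have l: "real N powr (real_of_int (- int m) - 1/2) \<le> x"
  proof -
    have "real N powr (real_of_int (- int m) - 1/2) = (1 / real N ^ m) * (1 / sqrt (real N))"
      using Np by (simp add: powr_diff pm powr_half_sqrt)
    also have "\<dots> \<le> (1 / real N ^ m) * (3/8)"
    proof (rule mult_left_mono)
      have "0 < sqrt (real N)" using sqrtN by linarith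
      then show "1 / sqrt (real N) \<le> 3/8" using sqrtN by (simp add: divide_le_eq)
    qed (use Nm in simp)
    also have "\<dots> \<le> x" using x1 by simp
    finally show ?thesis .
  qed
  have u: "x \<le> real N powr (real_of_int (- int m) + 1/2)"
  proof -
    have "real N powr (real_of_int (- int m) + 1/2) = (1 / real N ^ m) * sqrt (real N)"
      using Np by (simp add: powr_add pm powr_half_sqrt) (simp add: powr_diff powr_half_sqrt powr_realpow)
    also have "\<dots> \<ge> (1 / real N ^ m) * 1"
      using sqrtN Nm N16 by (intro mult_left_mono) auto
    finally show ?thesis using x2 by simp
  qed
  have K1: "K x = real N ^ m * K (real N ^ m * x)"
    using scale[of "- int m" x] l u pmm by simp
  have r: "\<rho>^2 * real N \<ge> 64/9"
  proof -
    have "\<rho>^2 \<ge> (2/3)^2" using rho1 by (intro power_mono) auto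
    then have "\<rho>^2 \<ge> 4/9" by (simp add: power2_eq_square)
    then show ?thesis using Npos mult_mono[of "4/9" "\<rho>^2" 16 "real N"] by simp
  qed
  have sq: "sqrt (\<rho>^2 * real N) \<ge> 8/3"
  proof -
    have "sqrt (64/9) \<le> sqrt (\<rho>^2 * real N)" using r by (simp only: real_sqrt_le_iff)
    moreover have "sqrt (64/9::real) = 8/3" by (simp add: real_sqrt_divide)
    ultimately show ?thesis by simp
  qed
  have rp: "\<rho>^2 * real N > 0" using r by simp
  have o1: "(\<rho>^2 * real N) powr (-1/2) \<le> real N ^ m * x"
  proof -
    have "(\<rho>^2 * real N) powr (-1/2) = 1 / sqrt (\<rho>^2 * real N)"
      using rp by (simp add: powr_minus_divide powr_half_sqrt)
    also have "\<dots> \<le> 3/8" proof - have "0 < sqrt (\<rho>^2 * real N)" using sq by linarith then show ?thesis using sq by (simp add: divide_le_eq) qed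
    finally show ?thesis using assms(1) by simp
  qed
  have o2: "real N ^ m * x \<le> (\<rho>^2 * real N) powr (1/2)"
    using rp sq assms(2) by (simp add: powr_half_sqrt)
  show ?thesis using K1 one[OF conjI[OF o1 o2]] by simp
qed

lemma Kodd: "K (- x) = - K x" using flat unfolding is_flat_kernel_def by blast

end

context CS begin

abbreviation "cc k j \<equiv> cantor_center N k j"

lemma anc_lt: "j < 2^k \<Longrightarrow> m \<le> k \<Longrightarrow> anc k j m < 2^m"
  unfolding anc_def by (simp add: less_mult_imp_div_less power_add[symmetric])

lemma anc_div: "m \<le> m' \<Longrightarrow> m' \<le> k \<Longrightarrow> anc k j m = anc k j m' div 2^(m'-m)"
proof -
  assume a: "m \<le> m'" "m' \<le> k"
  have "k - m = (k - m') + (m' - m)" using a by simp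
  then show ?thesis unfolding anc_def by (simp add: power_add div_mult2_eq)
qed

lemma anc_nest: "m \<le> m' \<Longrightarrow> m' \<le> k \<Longrightarrow> ci m' (anc k j m') \<subseteq> ci m (anc k j m)"
proof -
  assume a: "m \<le> m'" "m' \<le> k"
  have "ci (m + (m'-m)) (anc k j m') \<subseteq> ci m (anc k j m' div 2^(m'-m))" by (rule anc_sub)
  then show ?thesis using a anc_div[OF a] by simp
qed

lemma self_sub: "m \<le> k \<Longrightarrow> ci k j \<subseteq> ci m (anc k j m)"
  using anc_nest[of m k k j] by simp

lemma anc0: "j < 2^k \<Longrightarrow> anc k j 0 = 0"
  unfolding anc_def by simp

lemma anc_Suc_div: "m < k \<Longrightarrow> anc k j (Suc m) div 2 = anc k j m"
  using anc_div[of m "Suc m" k j] by simp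

lemma sib_div: "sib c div 2 = c div 2" unfolding sib_def by (cases "even c") (auto elim!: oddE)
lemma sib_ne: "sib c \<noteq> c" unfolding sib_def by (cases "even c") (auto elim!: oddE)
lemma sib_lt: "c < 2^Suc m \<Longrightarrow> sib c < 2^Suc m"
  unfolding sib_def by (cases "even c") (auto elim!: evenE)

lemma pc_sub: "m < k \<Longrightarrow> pc k j m \<subseteq> ci m (anc k j m)"
  unfolding pc_def using child_sub[of m "sib (anc k j (Suc m))"] by (simp add: sib_div anc_Suc_div)

lemma pc_disj: "j < 2^k \<Longrightarrow> m < k \<Longrightarrow> pc k j m \<inter> ci (Suc m) (anc k j (Suc m)) = {}"
proof -
  assume a: "j < 2^k" "m < k"
  have c: "anc k j (Suc m) < 2^Suc m" using anc_lt[of j k "Suc m"] a by simp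
  show ?thesis unfolding pc_def using disj_same[OF sib_ne[of "anc k j (Suc m)"] sib_lt[OF c] c] by auto
qed

lemma cc_def': "cc k j = lf k j + h k / 2" by (simp add: cantor_center_def)

lemma cc_in: "cc k j \<in> ci k j"
  using h_pos[of k] by (simp add: cc_def' cantor_int_def)

lemma cc_notL: "cc k j \<notin> ci (Suc k) (2*j)"
  using h_Suc_le[of k] h_pos[of k] by (simp add: cc_def' cantor_int_def)
lemma cc_notR: "cc k j \<notin> ci (Suc k) (2*j+1)"
  using h_Suc_le[of k] h_pos[of k] by (simp add: cc_def' cantor_int_def)

lemma Nhs: "real N ^ m * h (Suc m) = 1 / real N"
  using Npos by (simp add: power_one_over field_simps)

lemma Kpc: assumes "j < 2^k" "m < k" "y \<in> pc k j m"
  shows "K (cc k j - y) = sg (anc k j (Suc m)) * real N ^ m"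
proof -
  define c where "c = anc k j (Suc m)"
  define p where "p = anc k j m"
  have cp: "c div 2 = p" unfolding c_def p_def using anc_Suc_div[OF assms(2)] .
  have zc: "cc k j \<in> ci (Suc m) c" unfolding c_def using self_sub[of "Suc m" k j] assms cc_in by auto
  have Nm: "real N ^ m > 0" using Npos by simp
  have hs: "16 * h (Suc m) \<le> h m" by (rule h_Suc_le)
  have e1: "real N ^ m * h m = 1" by (rule Nh)
  have e2: "real N ^ m * h (Suc m) = 1 / real N" by (rule Nhs)
  have gap: "3/8 \<le> real N ^ m * (h m - 2 * h (Suc m))"
  proof -
    have "real N ^ m * (h m - 2 * h (Suc m)) = 1 - 2 / real N" using e1 e2 by (simp add: algebra_simps)
    moreover have "2 / real N \<le> 1/8" using Npos by (simp add: field_simps)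
    ultimately show ?thesis by simp
  qed
  have key: "K t = real N ^ m" if "h m - 2 * h (Suc m) \<le> t" "t \<le> h m" for t
  proof (rule Kval)
    have "real N ^ m * (h m - 2 * h (Suc m)) \<le> real N ^ m * t" using that(1) Nm by (intro mult_left_mono) auto
    then show "3/8 \<le> real N ^ m * t" using gap by linarith
    show "real N ^ m * t \<le> 1" using e1 mult_left_mono[OF that(2), of "real N ^ m"] Nm by simp
  qed
  show ?thesis
  proof (cases "odd c")
    case True
    then have c: "c = 2*p+1" using cp by (auto elim!: oddE)
    have s: "sib c = 2*p" using True c by (simp add: sib_def)
    have y: "y \<in> ci (Suc m) (2*p)" using assms(3) s unfolding pc_def c_def[symmetric] by simp
    have "h m - 2 * h (Suc m) \<le> cc k j - y" "cc k j - y \<le> h m"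
      using y zc c by (auto simp: cantor_int_def)
    then show ?thesis using key True by (simp add: sg_def c_def)
  next
    case False
    then have c: "c = 2*p" using cp by (auto elim!: evenE)
    have s: "sib c = 2*p+1" using False c by (simp add: sib_def)
    have y: "y \<in> ci (Suc m) (2*p+1)" using assms(3) s unfolding pc_def c_def[symmetric] by simp
    have "h m - 2 * h (Suc m) \<le> y - cc k j" "y - cc k j \<le> h m"
      using y zc c by (auto simp: cantor_int_def)
    then have "K (y - cc k j) = real N ^ m" using key by simp
    then have "K (cc k j - y) = -(real N ^ m)" using Kodd[of "y - cc k j"] by simp
    then show ?thesis using False by (simp add: sg_def c_def)
  qed
qed

lemma Kown: assumes "y \<in> ci (Suc k) (2*j) \<or> y \<in> ci (Suc k) (2*j+1)"
  shows "K (cc k j - y) = (if y \<in> ci (Suc k) (2*j) then real N ^ k else -(real N ^ k))"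
proof -
  have Nm: "real N ^ k > 0" using Npos by simp
  have e1: "real N ^ k * h k = 1" by (rule Nh)
  have e2: "real N ^ k * h (Suc k) = 1 / real N" by (rule Nhs)
  have gap: "3/8 \<le> real N ^ k * (h k / 2 - h (Suc k))"
  proof -
    have "real N ^ k * (h k / 2 - h (Suc k)) = 1/2 - 1 / real N" using e1 e2 by (simp add: algebra_simps)
    moreover have "1 / real N \<le> 1/8" using Npos by (simp add: field_simps)
    ultimately show ?thesis by simp
  qed
  have key: "K t = real N ^ k" if "h k / 2 - h (Suc k) \<le> t" "t \<le> h k / 2" for t
  proof (rule Kval)
    have "real N ^ k * (h k / 2 - h (Suc k)) \<le> real N ^ k * t" using that(1) Nm by (intro mult_left_mono) auto
    then show "3/8 \<le> real N ^ k * t" using gap by linarith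
    have "real N ^ k * t \<le> real N ^ k * (h k / 2)" using mult_left_mono[OF that(2), of "real N ^ k"] Nm by simp
    also have "\<dots> = 1/2" using e1 by simp
    finally show "real N ^ k * t \<le> 1" by simp
  qed
  have hs: "16 * h (Suc k) \<le> h k" by (rule h_Suc_le)
  show ?thesis
  proof (cases "y \<in> ci (Suc k) (2*j)")
    case True
    then have "h k / 2 - h (Suc k) \<le> cc k j - y" "cc k j - y \<le> h k / 2"
      by (auto simp: cantor_int_def cc_def')
    then show ?thesis using key True by simp
  next
    case False
    then have y: "y \<in> ci (Suc k) (2*j+1)" using assms by simp
    then have "h k / 2 - h (Suc k) \<le> y - cc k j" "y - cc k j \<le> h k / 2"
      by (auto simp: cantor_int_def cc_def')
    then have "K (y - cc k j) = real N ^ k" using key by simp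
    then show ?thesis using Kodd[of "y - cc k j"] False by simp
  qed
qed

lemma own_sub: "ci (Suc k) (2*j) \<subseteq> ci k j" "ci (Suc k) (2*j+1) \<subseteq> ci k j"
  using child_sub[of k "2*j"] child_sub[of k "2*j+1"] by auto

lemma notpc_if_in: "j < 2^k \<Longrightarrow> m < k \<Longrightarrow> y \<in> ci k j \<Longrightarrow> y \<notin> pc k j m"
  using pc_disj[of j k m] self_sub[of "Suc m" k j] by auto

lemma pc_only: assumes "j < 2^k" "m < k" "y \<in> pc k j m" "m' < k" "m' \<noteq> m"
  shows "y \<notin> pc k j m'"
proof (cases "m < m'")
  case True
  have "pc k j m' \<subseteq> ci (Suc m) (anc k j (Suc m))"
    using pc_sub[OF assms(4), of j] anc_nest[of "Suc m" m' k j] True assms by auto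
  then show ?thesis using pc_disj[OF assms(1,2)] assms(3) by auto
next
  case False
  then have "m' < m" using assms by simp
  then have "pc k j m \<subseteq> ci (Suc m') (anc k j (Suc m'))"
    using pc_sub[OF assms(2), of j] anc_nest[of "Suc m'" m k j] assms by auto
  then show ?thesis using pc_disj[OF assms(1,4)] assms(3) by auto
qed

lemma Kform: assumes "j < 2^k" "y \<in> cs"
  shows "K (cc k j - y) = (\<Sum>m<k. sg (anc k j (Suc m)) * real N ^ m * indicator (pc k j m) y)
     + real N ^ k * (indicator (ci (Suc k) (2*j)) y - indicator (ci (Suc k) (2*j+1)) y)"
proof (cases "y \<in> ci k j")
  case True
  have z: "(\<Sum>m<k. sg (anc k j (Suc m)) * real N ^ m * indicator (pc k j m) y) = 0"
    using notpc_if_in[OF assms(1) _ True] by (intro sum.neutral) auto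
  have LR: "y \<in> ci (Suc k) (2*j) \<or> y \<in> ci (Suc k) (2*j+1)" by (rule cs_child[OF assms(2) True assms(1)])
  have d: "ci (Suc k) (2*j) \<inter> ci (Suc k) (2*j+1) = {}"
    using assms(1) by (intro disj_same) auto
  show ?thesis using Kown[OF LR] LR z d by (auto simp: indicator_def)
next
  case False
  define S where "S = {m. m \<le> k \<and> y \<in> ci m (anc k j m)}"
  have fS: "finite S" unfolding S_def by simp
  have 0: "0 \<in> S" unfolding S_def using anc0[OF assms(1)] cs_sub01 assms(2) by auto
  define M where "M = Max S"
  have MS: "M \<in> S" unfolding M_def using fS 0 Max_in by blast
  have Mk: "M < k" using MS False unfolding S_def using le_neq_implies_less by fastforce
  have yM: "y \<in> ci M (anc k j M)" using MS unfolding S_def by simp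
  have nS: "Suc M \<notin> S" using Max_ge[OF fS, of "Suc M"] unfolding M_def[symmetric] by auto
  have yM1: "y \<notin> ci (Suc M) (anc k j (Suc M))" using nS Mk unfolding S_def by simp
  have aM: "anc k j M < 2^M" using anc_lt[OF assms(1)] Mk by simp
  have ch: "y \<in> ci (Suc M) (2 * anc k j M) \<or> y \<in> ci (Suc M) (2 * anc k j M + 1)"
    by (rule cs_child[OF assms(2) yM aM])
  have cdiv: "anc k j (Suc M) div 2 = anc k j M" by (rule anc_Suc_div[OF Mk])
  have ypc: "y \<in> pc k j M"
  proof (cases "even (anc k j (Suc M))")
    case True
    then have "anc k j (Suc M) = 2 * anc k j M" using cdiv by (auto elim!: evenE)
    then show ?thesis using ch yM1 True unfolding pc_def sib_def by auto
  next
    case False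
    then have "anc k j (Suc M) = 2 * anc k j M + 1" using cdiv by (auto elim!: oddE)
    then show ?thesis using ch yM1 False unfolding pc_def sib_def by auto
  qed
  have s: "(\<Sum>m<k. sg (anc k j (Suc m)) * real N ^ m * indicator (pc k j m) y) = sg (anc k j (Suc M)) * real N ^ M"
  proof -
    have "(\<Sum>m<k. sg (anc k j (Suc m)) * real N ^ m * indicator (pc k j m) y)
       = sg (anc k j (Suc M)) * real N ^ M * indicator (pc k j M) y
         + (\<Sum>m\<in>{..<k} - {M}. sg (anc k j (Suc m)) * real N ^ m * indicator (pc k j m) y)"
      using Mk by (subst sum.remove[of _ M]) auto
    also have "(\<Sum>m\<in>{..<k} - {M}. sg (anc k j (Suc m)) * real N ^ m * indicator (pc k j m) y) = 0"
      using pc_only[OF assms(1) Mk ypc] by (intro sum.neutral) auto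
    finally show ?thesis using ypc by simp
  qed
  have nL: "y \<notin> ci (Suc k) (2*j)" "y \<notin> ci (Suc k) (2*j+1)" using False own_sub[of k j] by blast+
  show ?thesis using s nL Kpc[OF assms(1) Mk ypc] by simp
qed

lemma pc_sets[simp]: "pc k j m \<in> sets \<omega>" unfolding pc_def by simp

lemma Hval: assumes "j < 2^k" "I \<in> sets borel"
  shows "H_flat_restr K \<omega> I (cc k j) = Vf I k j \<or> H_flat_restr K \<omega> I (cc k j) = 0"
proof -
  define f where "f y = indicator I y * K (cc k j - y)" for y
  define g where "g y = (\<Sum>m<k. sg (anc k j (Suc m)) * real N ^ m * indicator (I \<inter> pc k j m) y)
     + real N ^ k * (indicator (I \<inter> ci (Suc k) (2*j)) y - indicator (I \<inter> ci (Suc k) (2*j+1)) y)" for y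
  have Is: "I \<in> sets \<omega>" using assms(2) sets_om by simp
  have fm: "finite_measure \<omega>" by (rule fin)
  have ind: "integrable \<omega> (indicator (I \<inter> A) :: real \<Rightarrow> real)" if "A \<in> sets \<omega>" for A
    using that Is finite_measure.emeasure_finite[OF fm] by (auto simp: less_top)
  define g1 where "g1 y = (\<Sum>m<k. sg (anc k j (Suc m)) * real N ^ m * indicator (I \<inter> pc k j m) y)" for y
  define g2 where "g2 y = real N ^ k * (indicator (I \<inter> ci (Suc k) (2*j)) y - indicator (I \<inter> ci (Suc k) (2*j+1)) y)" for y
  have gg: "g = (\<lambda>y. g1 y + g2 y)" unfolding g_def g1_def g2_def by auto
  have i1: "integrable \<omega> (\<lambda>y. sg (anc k j (Suc m)) * real N ^ m * indicator (I \<inter> pc k j m) y)" for m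
    by (rule integrable_mult_right) (rule ind, simp)
  have gi1: "integrable \<omega> g1" unfolding g1_def
    by (rule Bochner_Integration.integrable_sum[where f="\<lambda>m y. sg (anc k j (Suc m)) * real N ^ m * indicator (I \<inter> pc k j m) y", OF i1])
  have L: "integrable \<omega> (indicator (I \<inter> ci (Suc k) (2*j)) :: real \<Rightarrow> real)" by (rule ind) simp
  have R: "integrable \<omega> (indicator (I \<inter> ci (Suc k) (2*j+1)) :: real \<Rightarrow> real)" by (rule ind) simp
  have gi2: "integrable \<omega> g2" unfolding g2_def
    by (rule integrable_mult_right) (rule Bochner_Integration.integrable_diff[OF L R])
  have gi: "integrable \<omega> g" unfolding gg using gi1 gi2 by (rule Bochner_Integration.integrable_add)
  have v1: "integral\<^sup>L \<omega> g1 = (\<Sum>m<k. sg (anc k j (Suc m)) * real N ^ m * measure \<omega> (I \<inter> pc k j m))"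
    unfolding g1_def by (subst Bochner_Integration.integral_sum) (use i1 in \<open>auto simp: space_om\<close>)
  have v2: "integral\<^sup>L \<omega> g2 = real N ^ k * (measure \<omega> (I \<inter> ci (Suc k) (2*j)) - measure \<omega> (I \<inter> ci (Suc k) (2*j+1)))"
    unfolding g2_def integral_mult_right_zero Bochner_Integration.integral_diff[OF L R] by (simp add: space_om)
  have gv: "integral\<^sup>L \<omega> g = Vf I k j"
    unfolding gg Bochner_Integration.integral_add[OF gi1 gi2] v1 v2 Vf_def ..
  have ae: "AE y in \<omega>. f y = g y"
    using AE_cs
  proof (rule AE_mp, intro AE_I2 impI)
    fix y assume "y \<in> cs"
    note kf = Kform[OF assms(1) this]
    show "f y = g y"
    proof (cases "y \<in> I")
      case True
      then have e: "indicator (I \<inter> A) y = (indicator A y :: real)" for A by (simp add: indicator_def)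
      show ?thesis unfolding f_def g_def e using True kf by simp
    next
      case False
      then have e: "indicator (I \<inter> A) y = (0::real)" for A by (simp add: indicator_def)
      show ?thesis unfolding f_def g_def e using False by simp
    qed
  qed
  show ?thesis
  proof (cases "integrable \<omega> f")
    case True
    have "integral\<^sup>L \<omega> f = integral\<^sup>L \<omega> g"
      by (rule integral_cong_AE) (use True gi ae in auto)
    then show ?thesis using gv unfolding H_flat_restr_def f_def by simp
  next
    case False
    then show ?thesis using not_integrable_integral_eq[OF False] unfolding H_flat_restr_def f_def by simp
  qed
qed

end

context CS begin

definition full where "full I k j \<longleftrightarrow> measure \<omega> (ci k j - I) = 0"

lemma sg_abs: "\<bar>sg c\<bar> = 1" by (simp add: sg_def)

lemma diffm: "A \<in> sets \<omega> \<Longrightarrow> I \<in> sets \<omega> \<Longrightarrow> measure \<omega> (I \<inter> A) = measure \<omega> A - measure \<omega> (A - I)"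
  using finite_measure.finite_measure_Diff'[OF fin, of A I] by (simp add: Int_commute)

lemma Vdiff: assumes "j < 2^k" "I \<in> sets \<omega>"
  shows "Vf I k j = - (\<Sum>m<k. sg (anc k j (Suc m)) * real N ^ m * measure \<omega> (pc k j m - I))
      - real N ^ k * (measure \<omega> (ci (Suc k) (2*j) - I) - measure \<omega> (ci (Suc k) (2*j+1) - I))"
proof -
  have "Vf I k j = Vf I k j - Vf UNIV k j" using zero[OF assms(1)] by simp
  also have "\<dots> = (\<Sum>m<k. sg (anc k j (Suc m)) * real N ^ m * (measure \<omega> (I \<inter> pc k j m) - measure \<omega> (pc k j m)))
      + real N ^ k * ((measure \<omega> (I \<inter> ci (Suc k) (2*j)) - w (Suc k) (2*j)) - (measure \<omega> (I \<inter> ci (Suc k) (2*j+1)) - w (Suc k) (2*j+1)))"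
    unfolding Vf_def by (simp add: sum_subtractf[symmetric] algebra_simps)
  also have "\<dots> = - (\<Sum>m<k. sg (anc k j (Suc m)) * real N ^ m * measure \<omega> (pc k j m - I))
      - real N ^ k * (measure \<omega> (ci (Suc k) (2*j) - I) - measure \<omega> (ci (Suc k) (2*j+1) - I))"
    using assms(2) by (simp add: diffm sum_negf[symmetric] algebra_simps)
  finally show ?thesis .
qed

definition dm where "dm I k j m = (if full I m (anc k j m) then 0 else real N ^ m * w m (anc k j m))"

lemma Vbound: assumes "j < 2^k" "I \<in> sets \<omega>"
  shows "\<bar>Vf I k j\<bar> \<le> (\<Sum>m\<le>k. dm I k j m)"
proof -
  have Np: "real N > 0" using Npos by simp
  have t1: "\<bar>sg (anc k j (Suc m)) * real N ^ m * measure \<omega> (pc k j m - I)\<bar> \<le> dm I k j m" if m: "m < k" for m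
  proof -
    have "\<bar>sg (anc k j (Suc m)) * real N ^ m * measure \<omega> (pc k j m - I)\<bar> = real N ^ m * measure \<omega> (pc k j m - I)"
      using Np by (simp add: abs_mult sg_abs)
    also have "\<dots> \<le> dm I k j m"
    proof (cases "full I m (anc k j m)")
      case True
      have "measure \<omega> (pc k j m - I) \<le> measure \<omega> (ci m (anc k j m) - I)"
        using pc_sub[OF m, of j] assms(2) by (intro meas_mono) auto
      then have "measure \<omega> (pc k j m - I) = 0" using True measure_nonneg[of \<omega> "pc k j m - I"] unfolding full_def by simp
      then show ?thesis using True by (simp add: dm_def)
    next
      case False
      have "measure \<omega> (pc k j m - I) \<le> w m (anc k j m)"
        using pc_sub[OF m, of j] assms(2) by (intro meas_mono) auto
      then show ?thesis using False Np by (simp add: dm_def)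
    qed
    finally show ?thesis .
  qed
  have t2: "real N ^ k * (measure \<omega> (ci (Suc k) (2*j) - I) + measure \<omega> (ci (Suc k) (2*j+1) - I)) \<le> dm I k j k"
  proof (cases "full I k j")
    case True
    have "measure \<omega> (ci (Suc k) (2*j) - I) \<le> measure \<omega> (ci k j - I)"
         "measure \<omega> (ci (Suc k) (2*j+1) - I) \<le> measure \<omega> (ci k j - I)"
      using own_sub[of k j] assms(2) by (intro meas_mono; auto)+
    then have "measure \<omega> (ci (Suc k) (2*j) - I) = 0" "measure \<omega> (ci (Suc k) (2*j+1) - I) = 0"
      using True measure_nonneg[of \<omega>] unfolding full_def by (metis order.antisym)+
    then show ?thesis using True by (simp add: dm_def full_def)
  next
    case False
    have "measure \<omega> (ci (Suc k) (2*j) - I) \<le> w (Suc k) (2*j)"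
         "measure \<omega> (ci (Suc k) (2*j+1) - I) \<le> w (Suc k) (2*j+1)"
      using assms(2) by (intro meas_mono; auto)+
    then have "measure \<omega> (ci (Suc k) (2*j) - I) + measure \<omega> (ci (Suc k) (2*j+1) - I) \<le> w k j"
      using w_rec[OF assms(1)] by linarith
    then show ?thesis using False Np by (simp add: dm_def)
  qed
  have "\<bar>Vf I k j\<bar> \<le> \<bar>\<Sum>m<k. sg (anc k j (Suc m)) * real N ^ m * measure \<omega> (pc k j m - I)\<bar>
      + \<bar>real N ^ k * (measure \<omega> (ci (Suc k) (2*j) - I) - measure \<omega> (ci (Suc k) (2*j+1) - I))\<bar>"
    unfolding Vdiff[OF assms] by linarith
  also have "\<dots> \<le> (\<Sum>m<k. dm I k j m) + dm I k j k"
  proof (rule add_mono)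
    show "\<bar>\<Sum>m<k. sg (anc k j (Suc m)) * real N ^ m * measure \<omega> (pc k j m - I)\<bar> \<le> (\<Sum>m<k. dm I k j m)"
      by (rule order.trans[OF sum_abs sum_mono]) (use t1 in auto)
    have "\<bar>real N ^ k * (measure \<omega> (ci (Suc k) (2*j) - I) - measure \<omega> (ci (Suc k) (2*j+1) - I))\<bar>
        \<le> real N ^ k * (measure \<omega> (ci (Suc k) (2*j) - I) + measure \<omega> (ci (Suc k) (2*j+1) - I))"
      using Np by (simp add: abs_mult abs_le_iff)
    then show "\<bar>real N ^ k * (measure \<omega> (ci (Suc k) (2*j) - I) - measure \<omega> (ci (Suc k) (2*j+1) - I))\<bar> \<le> dm I k j k"
      using t2 by linarith
  qed
  also have "\<dots> = (\<Sum>m\<le>k. dm I k j m)" by (simp add: lessThan_Suc_atMost[symmetric])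
  finally show ?thesis .
qed

lemma wratio: assumes "j < 2^k" "m + d \<le> k"
  shows "w m (anc k j m) \<le> 3^d * w (m+d) (anc k j (m+d))"
  using assms(2)
proof (induction d)
  case 0 then show ?case by simp
next
  case (Suc d)
  have l: "anc k j (Suc (m+d)) < 2^Suc (m+d)" using anc_lt[OF assms(1), of "Suc (m+d)"] Suc.prems by simp
  have "w (m+d) (anc k j (m+d)) \<le> 3 * w (Suc (m+d)) (anc k j (Suc (m+d)))"
    using w_child3[OF l] anc_Suc_div[of "m+d" k j] Suc.prems by simp
  then have "(3::real)^d * w (m+d) (anc k j (m+d)) \<le> 3^d * (3 * w (Suc (m+d)) (anc k j (Suc (m+d))))"
    by (rule mult_left_mono) simp
  moreover have "w m (anc k j m) \<le> 3^d * w (m+d) (anc k j (m+d))" using Suc.IH Suc.prems by simp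
  moreover have "(3::real)^Suc d * w (m + Suc d) (anc k j (m + Suc d)) = 3^d * (3 * w (Suc (m+d)) (anc k j (Suc (m+d))))" by simp
  ultimately show ?case by linarith
qed

lemma geo: assumes "j < 2^k" "M \<le> k"
  shows "(\<Sum>m\<le>M. real N ^ m * w m (anc k j m)) \<le> 2 * real N ^ M * w M (anc k j M)"
  using assms(2)
proof (induction M)
  case 0 then show ?case by simp
next
  case (Suc M)
  have l: "anc k j (Suc M) < 2^Suc M" using anc_lt[OF assms(1), of "Suc M"] Suc.prems by blast
  have c3: "w M (anc k j M) \<le> 3 * w (Suc M) (anc k j (Suc M))"
    using w_child3[OF l] anc_Suc_div[of M k j] Suc.prems by simp
  have Np: "real N \<ge> 16" by (rule Npos)
  have NM: "real N ^ M \<ge> 0" by simp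
  have wn: "w (Suc M) (anc k j (Suc M)) \<ge> 0" by simp
  have "(\<Sum>m\<le>Suc M. real N ^ m * w m (anc k j m)) \<le> 2 * real N ^ M * w M (anc k j M) + real N ^ Suc M * w (Suc M) (anc k j (Suc M))"
    using Suc by simp
  also have "\<dots> \<le> 2 * real N ^ M * (3 * w (Suc M) (anc k j (Suc M))) + real N ^ Suc M * w (Suc M) (anc k j (Suc M))"
    using c3 NM by (intro add_mono mult_left_mono) auto
  also have "\<dots> = (6 + real N) * (real N ^ M * w (Suc M) (anc k j (Suc M)))" by (simp add: algebra_simps)
  also have "\<dots> \<le> (2 * real N) * (real N ^ M * w (Suc M) (anc k j (Suc M)))"
    using Np NM wn by (intro mult_right_mono) auto
  also have "\<dots> = 2 * real N ^ Suc M * w (Suc M) (anc k j (Suc M))" by simp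
  finally show ?case .
qed

end

context CS begin

definition G where "G I k j = cantor_weight N \<omega> k j * \<bar>H_flat_restr K \<omega> I (cc k j)\<bar>^2"

lemma G_nonneg: "j < 2^k \<Longrightarrow> G I k j \<ge> 0"
  unfolding G_def cantor_weight_def using w_pos[of j k] by simp

lemma Gle: assumes "j < 2^k" "I \<in> sets borel" "\<bar>Vf I k j\<bar> \<le> B"
  shows "G I k j \<le> h (2*k) / w k j * B^2"
proof -
  have Hb: "\<bar>H_flat_restr K \<omega> I (cc k j)\<bar> \<le> B"
    using Hval[OF assms(1,2)] assms(3) by auto
  have hb: "\<bar>H_flat_restr K \<omega> I (cc k j)\<bar>^2 \<le> B^2"
    by (rule power_mono[OF Hb]) simp
  have s: "h (2*k) / w k j \<ge> 0" using w_pos[OF assms(1)] by simp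
  show ?thesis unfolding G_def cantor_weight_def by (rule mult_left_mono[OF hb s])
qed

lemma full_down: assumes "I \<in> sets \<omega>" "m \<le> m'" "m' \<le> k" "full I m (anc k j m)"
  shows "full I m' (anc k j m')"
proof -
  have "measure \<omega> (ci m' (anc k j m') - I) \<le> measure \<omega> (ci m (anc k j m) - I)"
    using anc_nest[OF assms(2,3), of j] assms(1) by (intro meas_mono) auto
  then show ?thesis using assms(4) measure_nonneg[of \<omega> "ci m' (anc k j m') - I"] unfolding full_def by linarith
qed

lemma hN2: "h 2 \<le> 1/256"
proof -
  have "(1 / real N)^2 \<le> (1/16)^2" using Npos by (intro power_mono) (auto simp: field_simps)
  then show ?thesis by (simp add: power2_eq_square)
qed

lemma arithB: "real N ^ (2*M) * h (2*(M + d + 1)) * 36 * 3^d \<le> (1/64)^d"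
proof -
  have ee: "2*(M + d + 1) = 2*M + (2 + 2*d)" by simp
  have "h (2*(M + d + 1)) = h (2*M) * (h 2 * (h 2)^d)"
    by (simp only: ee power_add power_mult)
  moreover have "real N ^ (2*M) * h (2*M) = 1" by (rule Nh)
  ultimately have e: "real N ^ (2*M) * h (2*(M + d + 1)) * 36 * 3^d = (36 * h 2) * (3 * h 2)^d"
    by (simp add: power_mult_distrib algebra_simps)
  have a: "36 * h 2 \<le> 1" using hN2 by simp
  have b: "(3 * h 2)^d \<le> (1/64)^d" using hN2 by (intro power_mono) auto
  have c: "(3 * h 2)^d \<ge> 0" by simp
  have "(36 * h 2) * (3 * h 2)^d \<le> 1 * (1/64)^d"
    using a b c by (intro mult_mono) auto
  then show ?thesis using e by simp
qed

lemma sum_dm_M: assumes "\<forall>m\<le>k. (\<not> full I m (anc k j m)) = (m \<le> M)" "M \<le> k"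
  shows "(\<Sum>m\<le>k. dm I k j m) = (\<Sum>m\<le>M. real N ^ m * w m (anc k j m))"
proof -
  have z: "\<forall>i\<in>{..k} - {..M}. dm I k j i = 0" using assms by (auto simp: dm_def)
  have "(\<Sum>m\<le>k. dm I k j m) = (\<Sum>m\<le>M. dm I k j m)"
    using sum.mono_neutral_right[of "{..k}" "{..M}", OF _ _ z] assms(2) by auto
  also have "\<dots> = (\<Sum>m\<le>M. real N ^ m * w m (anc k j m))"
  proof (rule sum.cong[OF refl])
    fix x assume x: "x \<in> {..M}"
    then have "x \<le> k" using assms(2) by simp
    then have "\<not> full I x (anc k j x)" using assms(1) x by simp
    then show "dm I k j x = real N ^ x * w x (anc k j x)" by (simp add: dm_def)
  qed
  finally show ?thesis .
qed

lemma caseB: assumes "j < 2^k" "I \<in> sets borel" "M < k"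
    "\<forall>m\<le>k. (\<not> full I m (anc k j m)) = (m \<le> M)"
  shows "G I k j \<le> (1/64)^(k - Suc M) * w (Suc M) (anc k j (Suc M))"
proof -
  define d where "d = k - Suc M"
  have kd: "k = M + d + 1" using assms(3) unfolding d_def by simp
  define wF where "wF = w (Suc M) (anc k j (Suc M))"
  have Is: "I \<in> sets \<omega>" using assms(2) sets_om by simp
  have l: "anc k j (Suc M) < 2^Suc M" using anc_lt[OF assms(1), of "Suc M"] assms(3) by simp
  have c3: "w M (anc k j M) \<le> 3 * wF"
    using w_child3[OF l] anc_Suc_div[OF assms(3), of j] unfolding wF_def by simp
  have V: "\<bar>Vf I k j\<bar> \<le> 6 * real N ^ M * wF"
  proof -
    have "\<bar>Vf I k j\<bar> \<le> (\<Sum>m\<le>M. real N ^ m * w m (anc k j m))"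
      using Vbound[OF assms(1) Is] sum_dm_M[OF assms(4)] assms(3) by simp
    also have "\<dots> \<le> 2 * real N ^ M * w M (anc k j M)" using geo[OF assms(1)] assms(3) by simp
    also have "\<dots> \<le> 2 * real N ^ M * (3 * wF)" using c3 by (intro mult_left_mono) auto
    finally show ?thesis by simp
  qed
  have wk: "w k j > 0" using w_pos[OF assms(1)] .
  have wFk: "wF \<le> 3^d * w k j"
    using wratio[OF assms(1), of "Suc M" d] kd unfolding wF_def by simp
  have wF0: "wF \<ge> 0" unfolding wF_def by simp
  have "G I k j \<le> h (2*k) / w k j * (6 * real N ^ M * wF)^2" by (rule Gle[OF assms(1,2) V])
  also have "\<dots> = (real N ^ (2*M) * h (2*k) * 36) * (wF * (wF / w k j))"
  proof -
    have "real N ^ (2*M) = real N^M * real N^M" by (simp add: mult_2 power_add)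
    then show ?thesis using wk by (simp add: power_mult_distrib field_simps power2_eq_square)
  qed
  also have "\<dots> \<le> (real N ^ (2*M) * h (2*k) * 36) * (wF * 3^d)"
  proof (intro mult_left_mono)
    show "wF / w k j \<le> 3^d" using wFk wk by (simp add: divide_le_eq)
  qed (use wF0 in auto)
  also have "\<dots> = (real N ^ (2*M) * h (2*(M+d+1)) * 36 * 3^d) * wF" using kd by (simp add: algebra_simps)
  also have "\<dots> \<le> (1/64)^d * wF" using arithB[of M d] wF0 by (intro mult_right_mono) auto
  finally show ?thesis unfolding d_def wF_def .
qed

lemma caseC: assumes "j < 2^k" "I \<in> sets borel" "\<not> full I k j"
  shows "G I k j \<le> 4 * w k j"
proof -
  have Is: "I \<in> sets \<omega>" using assms(2) sets_om by simp
  have nf: "\<forall>m\<le>k. (\<not> full I m (anc k j m)) = (m \<le> k)"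
    using full_down[OF Is, of _ k k j] assms(3) by auto
  have V: "\<bar>Vf I k j\<bar> \<le> 2 * real N ^ k * w k j"
    using Vbound[OF assms(1) Is] sum_dm_M[OF nf] geo[OF assms(1), of k] by simp
  have wk: "w k j > 0" using w_pos[OF assms(1)] .
  have "G I k j \<le> h (2*k) / w k j * (2 * real N ^ k * w k j)^2" by (rule Gle[OF assms(1,2) V])
  also have "\<dots> = 4 * (real N ^ k * h k)^2 * w k j"
    using wk by (simp add: power_mult_distrib power_mult field_simps power2_eq_square)
  also have "\<dots> = 4 * w k j" by (simp add: Nh)
  finally show ?thesis .
qed

end

context CS begin

definition EE where "EE I k j \<longleftrightarrow> j < 2^k \<and> cc k j \<in> I \<and> \<not> full I (Suc k) (2*j) \<and> \<not> full I (Suc k) (2*j+1)"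

lemma nonfull_pt: assumes "\<not> full I k j" shows "\<exists>y. y \<in> ci k j \<and> y \<notin> I"
proof (rule ccontr)
  assume "\<not> ?thesis"
  then have "ci k j - I = {}" by blast
  then show False using assms unfolding full_def by (metis measure_empty)
qed

lemma L_lt: "y \<in> ci (Suc k) (2*j) \<Longrightarrow> y < cc k j"
  using h_Suc_le[of k] h_pos[of k] by (simp add: cc_def' cantor_int_def)
lemma R_gt: "y \<in> ci (Suc k) (2*j+1) \<Longrightarrow> cc k j < y"
  using h_Suc_le[of k] h_pos[of k] by (simp add: cc_def' cantor_int_def)

lemma caseE: assumes "EE I k j" "is_interval I"
  shows "G I k j \<le> measure \<omega> I"
proof -
  have j: "j < 2^k" and zI: "cc k j \<in> I" and nL: "\<not> full I (Suc k) (2*j)" and nR: "\<not> full I (Suc k) (2*j+1)"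
    using assms(1) unfolding EE_def by auto
  have Ib: "I \<in> sets borel" using assms(2) by (rule real_interval_borel_measurable)
  have Is: "I \<in> sets \<omega>" using Ib sets_om by simp
  obtain yL where yL: "yL \<in> ci (Suc k) (2*j)" "yL \<notin> I" using nonfull_pt[OF nL] by blast
  obtain yR where yR: "yR \<in> ci (Suc k) (2*j+1)" "yR \<notin> I" using nonfull_pt[OF nR] by blast
  have iv: "\<And>a b x. a \<in> I \<Longrightarrow> b \<in> I \<Longrightarrow> a \<le> x \<Longrightarrow> x \<le> b \<Longrightarrow> x \<in> I"
    using assms(2) unfolding is_interval_1 by blast
  have emp: "I \<inter> pc k j m = {}" if m: "m < k" for m
  proof (rule ccontr)
    assume "I \<inter> pc k j m \<noteq> {}"
    then obtain p where p: "p \<in> I" "p \<in> pc k j m" by blast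
    define c where "c = anc k j (Suc m)"
    define q where "q = anc k j m"
    have cq: "c div 2 = q" unfolding c_def q_def using anc_Suc_div[OF m] .
    have sub: "ci k j \<subseteq> ci (Suc m) c" unfolding c_def using self_sub[of "Suc m" k j] m by simp
    have hs: "16 * h (Suc m) \<le> h m" by (rule h_Suc_le)
    have hp: "h (Suc m) > 0" by (rule h_pos)
    show False
    proof (cases "odd c")
      case True
      then have c: "c = 2*q+1" using cq by (auto elim!: oddE)
      have "pc k j m = ci (Suc m) (2*q)" unfolding pc_def c_def[symmetric] using c by (simp add: sib_def)
      then have p2: "p \<le> lf m q + h (Suc m)" using p by (simp add: cantor_int_def)
      have "yL \<in> ci (Suc m) (2*q+1)" using yL(1) own_sub[of k j] sub c by blast
      then have "lf m q + h m - h (Suc m) \<le> yL" by (simp add: cantor_int_def)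
      then have "p \<le> yL" using p2 hs hp by linarith
      moreover have "yL \<le> cc k j" using L_lt[OF yL(1)] by simp
      ultimately show False using iv[OF p(1) zI] yL(2) by blast
    next
      case False
      then have c: "c = 2*q" using cq by (auto elim!: evenE)
      have "pc k j m = ci (Suc m) (2*q+1)" unfolding pc_def c_def[symmetric] using c False by (simp add: sib_def)
      then have p2: "lf m q + h m - h (Suc m) \<le> p" using p by (simp add: cantor_int_def)
      have "yR \<in> ci (Suc m) (2*q)" using yR(1) own_sub[of k j] sub c by blast
      then have "yR \<le> lf m q + h (Suc m)" by (simp add: cantor_int_def)
      then have "yR \<le> p" using p2 hs hp by linarith
      moreover have "cc k j \<le> yR" using R_gt[OF yR(1)] by simp
      ultimately show False using iv[OF zI p(1)] yR(2) by blast
    qed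
  qed
  define a where "a = measure \<omega> (I \<inter> ci (Suc k) (2*j))"
  define b where "b = measure \<omega> (I \<inter> ci (Suc k) (2*j+1))"
  have Vv: "Vf I k j = real N ^ k * (a - b)"
    unfolding Vf_def a_def b_def using emp by simp
  have a0: "a \<ge> 0" "b \<ge> 0" unfolding a_def b_def by simp_all
  have V: "\<bar>Vf I k j\<bar> \<le> real N ^ k * (a + b)"
  proof -
    have "\<bar>a - b\<bar> \<le> a + b" using a0 by (simp add: abs_le_iff)
    then show ?thesis unfolding Vv abs_mult using mult_left_mono[of "\<bar>a - b\<bar>" "a + b" "real N ^ k"] by simp
  qed
  have dLR: "ci (Suc k) (2*j) \<inter> ci (Suc k) (2*j+1) = {}" using j by (intro disj_same) auto
  have ab: "a + b \<le> measure \<omega> I"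
  proof -
    have "a + b = measure \<omega> ((I \<inter> ci (Suc k) (2*j)) \<union> (I \<inter> ci (Suc k) (2*j+1)))"
      unfolding a_def b_def using dLR Is by (intro finite_measure.finite_measure_Union[OF fin, symmetric]) auto
    also have "\<dots> \<le> measure \<omega> I" using Is by (intro meas_mono) auto
    finally show ?thesis .
  qed
  have abw: "a + b \<le> w k j"
  proof -
    have "a \<le> w (Suc k) (2*j)" "b \<le> w (Suc k) (2*j+1)" unfolding a_def b_def using Is by (intro meas_mono; auto)+
    then show ?thesis using w_rec[OF j] by linarith
  qed
  have wk: "w k j > 0" using w_pos[OF j] .
  have "G I k j \<le> h (2*k) / w k j * (real N ^ k * (a + b))^2" by (rule Gle[OF j Ib V])
  also have "\<dots> = (real N ^ k * h k)^2 * ((a + b) * ((a + b) / w k j))"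
    using wk by (simp add: power_mult_distrib power_mult field_simps power2_eq_square)
  also have "\<dots> = (a + b) * ((a + b) / w k j)" by (simp add: Nh)
  also have "\<dots> \<le> (a + b) * 1"
    using abw wk a0 by (intro mult_left_mono) (auto simp: divide_le_eq)
  finally show ?thesis using ab by simp
qed

lemma child_of_desc: assumes "k < k'" "j' < 2^k'" "j' div 2^(k'-k) = j"
  shows "ci k' j' \<subseteq> ci (Suc k) (2*j) \<or> ci k' j' \<subseteq> ci (Suc k) (2*j+1)"
proof -
  define c where "c = j' div 2^(k' - Suc k)"
  have "ci (Suc k + (k' - Suc k)) j' \<subseteq> ci (Suc k) c" unfolding c_def by (rule anc_sub)
  then have s: "ci k' j' \<subseteq> ci (Suc k) c" using assms(1) by simp
  have "k' - k = Suc (k' - Suc k)" using assms(1) by simp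
  then have "c div 2 = j" unfolding c_def using assms(3) by (metis div_mult2_eq mult.commute power_Suc)
  then have "c = 2*j \<or> c = 2*j+1" by presburger
  then show ?thesis using s by auto
qed

lemma uniqE_aux: assumes "EE I k j" "EE I k' j'" "is_interval I" "cc k j \<le> cc k' j'"
  shows "k = k' \<and> j = j'"
proof -
  have j: "j < 2^k" and zI: "cc k j \<in> I" and nR: "\<not> full I (Suc k) (2*j+1)"
    using assms(1) unfolding EE_def by auto
  have j': "j' < 2^k'" and zI': "cc k' j' \<in> I" and nL': "\<not> full I (Suc k') (2*j')"
    using assms(2) unfolding EE_def by auto
  have iv: "\<And>a b x. a \<in> I \<Longrightarrow> b \<in> I \<Longrightarrow> a \<le> x \<Longrightarrow> x \<le> b \<Longrightarrow> x \<in> I"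
    using assms(3) unfolding is_interval_1 by blast
  obtain y where y: "y \<in> ci (Suc k) (2*j+1)" "y \<notin> I" using nonfull_pt[OF nR] by blast
  obtain y' where y': "y' \<in> ci (Suc k') (2*j')" "y' \<notin> I" using nonfull_pt[OF nL'] by blast
  have zy: "cc k j < y" using R_gt[OF y(1)] .
  have yz: "y' < cc k' j'" using L_lt[OF y'(1)] .
  have y1: "cc k' j' < y"
  proof (rule ccontr)
    assume "\<not> cc k' j' < y" then have yy: "y \<le> cc k' j'" by simp
    show False using iv[OF zI zI' _ yy] zy y(2) by simp
  qed
  have y2: "y' < cc k j"
  proof (rule ccontr)
    assume "\<not> y' < cc k j" then have yy: "cc k j \<le> y'" by simp
    show False using iv[OF zI zI' yy] yz y'(2) by simp
  qed
  have yA: "y \<in> ci k j" using y(1) own_sub[of k j] by blast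
  have yA': "y' \<in> ci k' j'" using y'(1) own_sub[of k' j'] by blast
  have z'A: "cc k' j' \<in> ci k j" using cc_in[of k j] yA assms(4) y1 by (auto simp: cantor_int_def)
  have zA': "cc k j \<in> ci k' j'" using cc_in[of k' j'] yA' assms(4) y2 by (auto simp: cantor_int_def)
  show ?thesis
  proof (cases "k \<le> k'")
    case True
    have dv: "j' div 2^(k'-k) = j"
    proof (rule ccontr)
      assume "j' div 2^(k'-k) \<noteq> j"
      from nest_or_disj[OF True j j' this] show False using cc_in[of k j] zA' by blast
    qed
    show ?thesis
    proof (cases "k = k'")
      case True then show ?thesis using dv by simp
    next
      case False
      then have "k < k'" using \<open>k \<le> k'\<close> by simp
      from child_of_desc[OF this j' dv] show ?thesis using zA' cc_notL[of k j] cc_notR[of k j] by blast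
    qed
  next
    case False
    then have kk: "k' < k" by simp
    have dv: "j div 2^(k-k') = j'"
    proof (rule ccontr)
      assume "j div 2^(k-k') \<noteq> j'"
      from nest_or_disj[OF _ j' j this] kk show False using cc_in[of k' j'] z'A by auto
    qed
    from child_of_desc[OF kk j dv] show ?thesis using z'A cc_notL[of k' j'] cc_notR[of k' j'] by blast
  qed
qed

lemma uniqE: "EE I k j \<Longrightarrow> EE I k' j' \<Longrightarrow> is_interval I \<Longrightarrow> (k, j) = (k', j')"
  using uniqE_aux[of I k j k' j'] uniqE_aux[of I k' j' k j] by (cases "cc k j \<le> cc k' j'") auto

end

context CS begin

definition bf where "bf I l i \<longleftrightarrow> 0 < l \<and> i < 2^l \<and> full I l i \<and> \<not> full I (l - 1) (i div 2)"

lemma classify: assumes j: "j < 2^k" and zI: "cc k j \<in> I" and iv: "is_interval I"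
  shows "G I k j \<le> 0 \<or>
    (\<exists>l. l \<le> k \<and> bf I l (anc k j l) \<and> G I k j \<le> (1/64)^(k-l) * w l (anc k j l)) \<or>
    (\<exists>c. c div 2 = j \<and> bf I (Suc k) c \<and> G I k j \<le> 12 * w (Suc k) c) \<or>
    (EE I k j \<and> G I k j \<le> measure \<omega> I)"
proof -
  have Ib: "I \<in> sets borel" using iv by (rule real_interval_borel_measurable)
  have Is: "I \<in> sets \<omega>" using Ib sets_om by simp
  show ?thesis
  proof (cases "full I 0 0")
    case True
    then have af: "full I m (anc k j m)" if "m \<le> k" for m
      using full_down[OF Is, of 0 m k j] that anc0[OF j] by simp
    have "(\<Sum>m\<le>k. dm I k j m) = 0" using af by (simp add: dm_def)
    then have "\<bar>Vf I k j\<bar> \<le> 0" using Vbound[OF j Is] by simp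
    from Gle[OF j Ib this] show ?thesis by simp
  next
    case False
    define NF where "NF = {m. m \<le> k \<and> \<not> full I m (anc k j m)}"
    have fNF: "finite NF" unfolding NF_def by simp
    have 0: "0 \<in> NF" unfolding NF_def using False anc0[OF j] by simp
    define M where "M = Max NF"
    have MNF: "M \<in> NF" unfolding M_def using fNF 0 Max_in by blast
    have Mk: "M \<le> k" using MNF unfolding NF_def by simp
    have P: "\<forall>m\<le>k. (\<not> full I m (anc k j m)) = (m \<le> M)"
    proof (intro allI impI iffI)
      fix m assume "m \<le> k" "\<not> full I m (anc k j m)"
      then have "m \<in> NF" unfolding NF_def by simp
      then show "m \<le> M" unfolding M_def using fNF by simp
    next
      fix m assume m: "m \<le> k" "m \<le> M"
      have "\<not> full I M (anc k j M)" using MNF unfolding NF_def by simp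
      then show "\<not> full I m (anc k j m)" using full_down[OF Is m(2) Mk, of j] by blast
    qed
    show ?thesis
    proof (cases "M < k")
      case True
      define l where "l = Suc M"
      have l: "l \<le> k" using True unfolding l_def by simp
      have fl: "full I (Suc M) (anc k j (Suc M))" using P[rule_format, of "Suc M"] True by simp
      have b: "bf I l (anc k j l)"
        unfolding bf_def l_def using fl
        using anc_lt[OF j, of "Suc M"] True P anc_Suc_div[OF True, of j] Mk by auto
      have "G I k j \<le> (1/64)^(k-l) * w l (anc k j l)" unfolding l_def by (rule caseB[OF j Ib True P])
      then show ?thesis using b l by blast
    next
      case False
      then have Mk': "M = k" using Mk by simp
      have nf: "\<not> full I k j" using P Mk' by (metis anc_self order_refl)
      have G4: "G I k j \<le> 4 * w k j" by (rule caseC[OF j Ib nf])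
      have cb: "2*j < 2^Suc k" "2*j+1 < 2^Suc k" using j by auto
      show ?thesis
      proof (cases "full I (Suc k) (2*j)")
        case True
        have b: "bf I (Suc k) (2*j)" unfolding bf_def using True nf cb by simp
        have "w k j \<le> 3 * w (Suc k) (2*j)" using w_child3[OF cb(1)] by simp
        then have "G I k j \<le> 12 * w (Suc k) (2*j)" using G4 by linarith
        then show ?thesis using b by (metis div_mult_self1_is_m zero_less_numeral)
      next
        case F1: False
        show ?thesis
        proof (cases "full I (Suc k) (2*j+1)")
          case True
          have b: "bf I (Suc k) (2*j+1)" unfolding bf_def using True nf cb by simp
          have "w k j \<le> 3 * w (Suc k) (2*j+1)" using w_child3[OF cb(2)] by simp
          then have "G I k j \<le> 12 * w (Suc k) (2*j+1)" using G4 by linarith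
          moreover have "(2*j+1) div 2 = j" by simp
          ultimately show ?thesis using b by blast
        next
          case False
          have "EE I k j" unfolding EE_def using j zI F1 False by simp
          then show ?thesis using caseE[OF _ iv] by blast
        qed
      qed
    qed
  qed
qed

end

lemma div_bounds: "(j::nat) div q = i \<Longrightarrow> 0 < q \<Longrightarrow> i * q \<le> j \<and> j < (i+1) * q"
proof -
  assume a: "j div q = i" "0 < q"
  have e: "j = i * q + j mod q" using div_mult_mod_eq[of j q] a(1) by simp
  have "j mod q < q" using a(2) by simp
  then show ?thesis using e by (metis add_less_cancel_left add_mult_distrib le_add1 mult_1 add.commute)
qed

lemma geo32: "(\<Sum>d\<in>{0..n}. (1/32::real)^d) \<le> 2"
proof -
  have "(\<Sum>d\<in>{0..n}. (1/32::real)^d) = (\<Sum>d<Suc n. (1/32::real)^d)"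
    by (simp add: atLeast0AtMost lessThan_Suc_atMost)
  also have "\<dots> = (1 - (1/32)^Suc n) / (1 - 1/32)" by (rule trans[OF sum_gp_strict]) simp
  also have "\<dots> \<le> 2"
  proof -
    have "(1/32::real)^n \<ge> 0" by simp
    then show ?thesis by (simp add: divide_le_eq) (smt (verit) zero_le_power zero_le_divide_1_iff)
  qed
  finally show ?thesis .
qed

lemma sum_single_le: "A \<subseteq> {a} \<Longrightarrow> (\<And>x. x \<in> A \<Longrightarrow> f x \<le> (b::real)) \<Longrightarrow> 0 \<le> b \<Longrightarrow> sum f A \<le> b"
  by (cases "A = {}") (auto dest: subset_singletonD)

context CS begin

lemma desc_sum: fixes Z :: "(nat \<times> nat) set" assumes "finite Z" "Z \<subseteq> {(k,j). l \<le> k \<and> j div 2^(k-l) = i}"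
  shows "(\<Sum>z\<in>Z. (1/64::real)^(fst z - l)) \<le> 2"
proof -
  obtain K0 where K0: "\<forall>z\<in>Z. fst z \<le> K0" "l \<le> K0"
  proof -
    have "finite (fst ` Z)" using assms(1) by simp
    then obtain K1 where "\<forall>k\<in>fst ` Z. k \<le> K1" using finite_nat_set_iff_bounded_le by blast
    then show ?thesis using that[of "max K1 l"] by fastforce
  qed
  define B where "B k = {i * 2^(k-l) ..< (i+1) * 2^(k-l)}" for k
  define Y where "Y = Sigma {l..K0} B"
  have ZY: "Z \<subseteq> Y"
  proof
    fix z assume z: "z \<in> Z"
    obtain k j where zk: "z = (k, j)" by fastforce
    have "l \<le> k" "j div 2^(k-l) = i" using assms(2) z zk by auto
    moreover have "k \<le> K0" using K0 z zk by auto
    ultimately show "z \<in> Y" unfolding Y_def B_def zk using div_bounds[of j "2^(k-l)" i] by auto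
  qed
  have fY: "finite Y" unfolding Y_def B_def by simp
  have "(\<Sum>z\<in>Z. (1/64::real)^(fst z - l)) \<le> (\<Sum>z\<in>Y. (1/64::real)^(fst z - l))"
    using ZY fY by (intro sum_mono2) auto
  also have "\<dots> = (\<Sum>k\<in>{l..K0}. \<Sum>j\<in>B k. (1/64::real)^(k - l))"
    unfolding Y_def by (subst sum.Sigma) (auto simp: B_def split_def)
  also have "\<dots> = (\<Sum>k\<in>{l..K0}. (1/32::real)^(k - l))"
  proof (rule sum.cong[OF refl])
    fix k assume "k \<in> {l..K0}"
    have c: "card (B k) = 2^(k-l)" unfolding B_def by (simp add: algebra_simps)
    have "(\<Sum>j\<in>B k. (1/64::real)^(k - l)) = real (2^(k-l)) * (1/64)^(k-l)" using c by simp
    also have "\<dots> = (1/32::real)^(k-l)"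
    proof -
      have e: "(1/32::real) = 2 * (1/64)" by simp
      show ?thesis by (simp only: e power_mult_distrib of_nat_power) simp
    qed
    finally show "(\<Sum>j\<in>B k. (1/64::real)^(k - l)) = (1/32)^(k-l)" .
  qed
  also have "\<dots> = (\<Sum>d\<in>{0..K0-l}. (1/32::real)^d)"
    using sum.atLeastAtMost_shift_0[OF K0(2), of "\<lambda>k. (1/32::real)^(k-l)"] by (simp add: comp_def)
  also have "\<dots> \<le> 2" by (rule geo32)
  finally show ?thesis .
qed

lemma bf_disj: assumes "bf I l i" "bf I l' i'" "l \<le> l'" "(l,i) \<noteq> (l',i')" "I \<in> sets \<omega>"
  shows "ci l i \<inter> ci l' i' = {}"
proof (cases "i' div 2^(l'-l) = i")
  case False
  then show ?thesis using nest_or_disj[OF assms(3)] assms(1,2) unfolding bf_def by blast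
next
  case True
  then have ll: "l < l'" using assms(3,4) by (cases "l = l'") auto
  have e: "i' div 2 div 2^(l' - 1 - l) = i"
  proof -
    have "l' - l = Suc (l' - 1 - l)" using ll by simp
    then show ?thesis using True by (metis div_mult2_eq power_Suc)
  qed
  have "ci (l + (l' - 1 - l)) (i' div 2) \<subseteq> ci l (i' div 2 div 2^(l' - 1 - l))" by (rule anc_sub)
  then have sub: "ci (l' - 1) (i' div 2) \<subseteq> ci l i" using ll e by simp
  have "measure \<omega> (ci (l'-1) (i' div 2) - I) \<le> measure \<omega> (ci l i - I)"
    using sub assms(5) by (intro meas_mono) auto
  then have "full I (l'-1) (i' div 2)" using assms(1) measure_nonneg[of \<omega> "ci (l'-1) (i' div 2) - I"]
    unfolding bf_def full_def by linarith
  then show ?thesis using assms(2) unfolding bf_def by blast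
qed

lemma disj_sum: assumes "finite X" "X \<subseteq> {(l,i). bf I l i}" "I \<in> sets \<omega>"
  shows "(\<Sum>F\<in>X. w (fst F) (snd F)) \<le> measure \<omega> I"
proof -
  define A where "A F = I \<inter> ci (fst F) (snd F)" for F
  have wA: "w (fst F) (snd F) = measure \<omega> (A F)" if "F \<in> X" for F
  proof -
    have "full I (fst F) (snd F)" using that assms(2) unfolding bf_def by auto
    then show ?thesis unfolding A_def using diffm[OF ci_sets assms(3)] unfolding full_def by simp
  qed
  have dj: "disjoint_family_on A X"
    unfolding disjoint_family_on_def
  proof (intro ballI impI)
    fix F F' assume F: "F \<in> X" "F' \<in> X" "F \<noteq> F'"
    obtain l i l' i' where e: "F = (l,i)" "F' = (l',i')" by fastforce
    have b: "bf I l i" "bf I l' i'" using F assms(2) e by auto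
    show "A F \<inter> A F' = {}"
    proof (cases "l \<le> l'")
      case True
      then show ?thesis using bf_disj[OF b True] F e assms(3) unfolding A_def by auto
    next
      case False
      then show ?thesis using bf_disj[OF b(2,1)] F e assms(3) unfolding A_def by auto
    qed
  qed
  have "(\<Sum>F\<in>X. w (fst F) (snd F)) = (\<Sum>F\<in>X. measure \<omega> (A F))" using wA by simp
  also have "\<dots> = measure \<omega> (\<Union>F\<in>X. A F)"
    using assms(3) by (intro finite_measure.finite_measure_finite_Union[OF fin, symmetric] assms(1) dj) (auto simp: A_def)
  also have "\<dots> \<le> measure \<omega> I" using assms(3) by (intro meas_mono) (auto simp: A_def)
  finally show ?thesis .
qed

end

context CS begin

lemma total: assumes fS: "finite S" and ST: "S \<subseteq> {(k,j). j < 2^k \<and> cc k j \<in> I}" and iv: "is_interval I"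
  shows "(\<Sum>z\<in>S. G I (fst z) (snd z)) \<le> 15 * measure \<omega> I"
proof -
  have Is: "I \<in> sets \<omega>" using real_interval_borel_measurable[OF iv] sets_om by simp
  define gg where "gg z = G I (fst z) (snd z)" for z
  define Pb where "Pb z = (\<exists>l. l \<le> fst z \<and> bf I l (anc (fst z) (snd z) l) \<and> gg z \<le> (1/64)^(fst z - l) * w l (anc (fst z) (snd z) l))" for z
  define Pc where "Pc z = (\<exists>c. c div 2 = snd z \<and> bf I (Suc (fst z)) c \<and> gg z \<le> 12 * w (Suc (fst z)) c)" for z
  define Pe where "Pe z = (EE I (fst z) (snd z) \<and> gg z \<le> measure \<omega> I)" for z
  define Sb where "Sb = {z\<in>S. Pb z}"
  define Sc where "Sc = {z\<in>S. \<not> Pb z \<and> Pc z}"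
  define Se where "Se = {z\<in>S. \<not> Pb z \<and> \<not> Pc z \<and> Pe z}"
  have mu0: "measure \<omega> I \<ge> 0" by simp
  have pw: "gg z \<le> (if Pb z then gg z else 0) + (if \<not> Pb z \<and> Pc z then gg z else 0) + (if \<not> Pb z \<and> \<not> Pc z \<and> Pe z then gg z else 0)"
    if z: "z \<in> S" for z
  proof -
    have j: "snd z < 2^fst z" "cc (fst z) (snd z) \<in> I" using z ST by auto
    from classify[OF j iv] have "gg z \<le> 0 \<or> Pb z \<or> Pc z \<or> Pe z"
      unfolding gg_def Pb_def Pc_def Pe_def by blast
    then show ?thesis by auto
  qed
  have "(\<Sum>z\<in>S. gg z) \<le> (\<Sum>z\<in>S. (if Pb z then gg z else 0) + (if \<not> Pb z \<and> Pc z then gg z else 0) + (if \<not> Pb z \<and> \<not> Pc z \<and> Pe z then gg z else 0))"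
    by (rule sum_mono) (rule pw)
  also have "\<dots> = (\<Sum>z\<in>Sb. gg z) + (\<Sum>z\<in>Sc. gg z) + (\<Sum>z\<in>Se. gg z)"
    unfolding sum.distrib Sb_def Sc_def Se_def using fS by (simp add: sum.inter_filter)
  also have "\<dots> \<le> 2 * measure \<omega> I + 12 * measure \<omega> I + measure \<omega> I"
  proof (intro add_mono)
    define fb where "fb z = (SOME l. l \<le> fst z \<and> bf I l (anc (fst z) (snd z) l) \<and> gg z \<le> (1/64)^(fst z - l) * w l (anc (fst z) (snd z) l))" for z
    define Fb where "Fb z = (fb z, anc (fst z) (snd z) (fb z))" for z
    have fbp: "fb z \<le> fst z \<and> bf I (fb z) (anc (fst z) (snd z) (fb z)) \<and> gg z \<le> (1/64)^(fst z - fb z) * w (fb z) (anc (fst z) (snd z) (fb z))"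
      if "z \<in> Sb" for z
      unfolding fb_def by (rule someI_ex) (use that in \<open>auto simp: Sb_def Pb_def\<close>)
    have fSb: "finite Sb" using fS unfolding Sb_def by simp
    have "(\<Sum>z\<in>Sb. gg z) = (\<Sum>F\<in>Fb ` Sb. \<Sum>z\<in>{z. z \<in> Sb \<and> Fb z = F}. gg z)"
      by (rule sum.image_gen[OF fSb])
    also have "\<dots> \<le> (\<Sum>F\<in>Fb ` Sb. 2 * w (fst F) (snd F))"
    proof (rule sum_mono)
      fix F assume "F \<in> Fb ` Sb"
      obtain l i where F: "F = (l, i)" by fastforce
      define Z where "Z = {z. z \<in> Sb \<and> Fb z = F}"
      have fZ: "finite Z" unfolding Z_def using fSb by simp
      have Zs: "Z \<subseteq> {(k,j). l \<le> k \<and> j div 2^(k-l) = i}"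
      proof
        fix z assume "z \<in> Z"
        then have "z \<in> Sb" "fb z = l" "anc (fst z) (snd z) (fb z) = i" unfolding Z_def Fb_def F by auto
        then show "z \<in> {(k,j). l \<le> k \<and> j div 2^(k-l) = i}" using fbp[of z] by (auto simp: anc_def)
      qed
      have "(\<Sum>z\<in>Z. gg z) \<le> (\<Sum>z\<in>Z. (1/64)^(fst z - l) * w l i)"
      proof (rule sum_mono)
        fix z assume "z \<in> Z"
        then have "z \<in> Sb" "fb z = l" "anc (fst z) (snd z) (fb z) = i" unfolding Z_def Fb_def F by auto
        then show "gg z \<le> (1/64)^(fst z - l) * w l i" using fbp[of z] by simp
      qed
      also have "\<dots> = (\<Sum>z\<in>Z. (1/64::real)^(fst z - l)) * w l i" by (simp add: sum_distrib_right)
      also have "\<dots> \<le> 2 * w l i" using desc_sum[OF fZ Zs] by (intro mult_right_mono) auto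
      finally show "(\<Sum>z\<in>{z. z \<in> Sb \<and> Fb z = F}. gg z) \<le> 2 * w (fst F) (snd F)" unfolding Z_def F by simp
    qed
    also have "\<dots> = 2 * (\<Sum>F\<in>Fb ` Sb. w (fst F) (snd F))" by (simp add: sum_distrib_left)
    also have "\<dots> \<le> 2 * measure \<omega> I"
    proof -
      have "Fb ` Sb \<subseteq> {(l,i). bf I l i}" using fbp unfolding Fb_def by auto
      from disj_sum[OF _ this Is] fSb show ?thesis by simp
    qed
    finally show "(\<Sum>z\<in>Sb. gg z) \<le> 2 * measure \<omega> I" .
  next
    define fc where "fc z = (SOME c. c div 2 = snd z \<and> bf I (Suc (fst z)) c \<and> gg z \<le> 12 * w (Suc (fst z)) c)" for z
    define Fc where "Fc z = (Suc (fst z), fc z)" for z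
    have fcp: "fc z div 2 = snd z \<and> bf I (Suc (fst z)) (fc z) \<and> gg z \<le> 12 * w (Suc (fst z)) (fc z)"
      if "z \<in> Sc" for z
      unfolding fc_def by (rule someI_ex) (use that in \<open>auto simp: Sc_def Pc_def\<close>)
    have fSc: "finite Sc" using fS unfolding Sc_def by simp
    have "(\<Sum>z\<in>Sc. gg z) = (\<Sum>F\<in>Fc ` Sc. \<Sum>z\<in>{z. z \<in> Sc \<and> Fc z = F}. gg z)"
      by (rule sum.image_gen[OF fSc])
    also have "\<dots> \<le> (\<Sum>F\<in>Fc ` Sc. 12 * w (fst F) (snd F))"
    proof (rule sum_mono)
      fix F assume "F \<in> Fc ` Sc"
      obtain l c where F: "F = (l, c)" by fastforce
      show "(\<Sum>z\<in>{z. z \<in> Sc \<and> Fc z = F}. gg z) \<le> 12 * w (fst F) (snd F)"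
      proof (rule sum_single_le[of _ "(l - 1, c div 2)"])
        show "{z. z \<in> Sc \<and> Fc z = F} \<subseteq> {(l - 1, c div 2)}"
        proof
          fix z assume z: "z \<in> {z. z \<in> Sc \<and> Fc z = F}"
          then have "Suc (fst z) = l" "fc z = c" "z \<in> Sc" unfolding Fc_def F by auto
          then show "z \<in> {(l - 1, c div 2)}" using fcp[of z] by (cases z) auto
        qed
        show "gg z \<le> 12 * w (fst F) (snd F)" if "z \<in> {z. z \<in> Sc \<and> Fc z = F}" for z
          using that fcp[of z] unfolding Fc_def F by auto
      qed simp
    qed
    also have "\<dots> = 12 * (\<Sum>F\<in>Fc ` Sc. w (fst F) (snd F))" by (simp add: sum_distrib_left)
    also have "\<dots> \<le> 12 * measure \<omega> I"
    proof -
      have "Fc ` Sc \<subseteq> {(l,i). bf I l i}" using fcp unfolding Fc_def by auto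
      from disj_sum[OF _ this Is] fSc show ?thesis by simp
    qed
    finally show "(\<Sum>z\<in>Sc. gg z) \<le> 12 * measure \<omega> I" .
  next
    show "(\<Sum>z\<in>Se. gg z) \<le> measure \<omega> I"
    proof (cases "Se = {}")
      case True then show ?thesis using mu0 by simp
    next
      case False
      then obtain z0 where z0: "z0 \<in> Se" by blast
      have "Se \<subseteq> {z0}"
      proof
        fix z assume z: "z \<in> Se"
        have "EE I (fst z) (snd z)" "EE I (fst z0) (snd z0)" using z z0 unfolding Se_def Pe_def by auto
        from uniqE[OF this iv] show "z \<in> {z0}" by (simp add: prod_eq_iff)
      qed
      then show ?thesis by (rule sum_single_le) (use mu0 in \<open>auto simp: Se_def Pe_def\<close>)
    qed
  qed
  finally show ?thesis unfolding gg_def by simp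
qed

end

theorem mainTheorem7:
  fixes N :: nat and \<rho> :: real and K :: "real \<Rightarrow> real" and \<omega> :: "real measure"
  assumes "N \<ge> 16" and "2/3 \<le> \<rho>" and "\<rho> < 1"
    and "is_flat_kernel N \<rho> K"
    and "is_redistributed_cantor_measure N \<omega>"
  shows "\<exists>C::real. \<forall>I::real set. is_interval I \<longrightarrow>
     (let T = {(k, j). j < 2^k \<and> cantor_center N k j \<in> I};
          g = (\<lambda>(k, j). cantor_weight N \<omega> k j * \<bar>H_flat_restr K \<omega> I (cantor_center N k j)\<bar>^2)
      in g summable_on T \<and> infsum g T \<le> C * measure \<omega> I)"
proof -
  interpret L: CS N \<rho> K \<omega> using assms by unfold_locales
  show ?thesis
  proof (intro exI[of _ 15] allI impI)
    fix I :: "real set" assume iv: "is_interval I"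
    define T where "T = {(k, j). j < (2::nat)^k \<and> cantor_center N k j \<in> I}"
    define g where "g = (\<lambda>(k, j). cantor_weight N \<omega> k j * \<bar>H_flat_restr K \<omega> I (cantor_center N k j)\<bar>^2)"
    have gG: "g z = L.G I (fst z) (snd z)" for z unfolding g_def L.G_def by (simp add: split_def)
    have fin: "sum g F \<le> 15 * measure \<omega> I" if "finite F" "F \<subseteq> T" for F
      using L.total[OF that(1) _ iv] that(2) unfolding gG T_def by simp
    have nn: "g z \<ge> 0" if "z \<in> T" for z using L.G_nonneg[of "snd z" "fst z" I] that unfolding gG T_def by auto
    have sm: "g summable_on T"
      by (rule nonneg_bdd_above_summable_on[OF nn]) (use fin in \<open>auto intro!: bdd_aboveI\<close>)
    have "infsum g T \<le> 15 * measure \<omega> I" by (rule infsum_le_finite_sums[OF sm fin])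
    then show "let T = {(k, j). j < 2^k \<and> cantor_center N k j \<in> I};
          g = (\<lambda>(k, j). cantor_weight N \<omega> k j * \<bar>H_flat_restr K \<omega> I (cantor_center N k j)\<bar>^2)
      in g summable_on T \<and> infsum g T \<le> 15 * measure \<omega> I"
      using sm unfolding T_def g_def Let_def by simp
  qed
qed

end
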